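(* Let $X$ be a countable infinite set, $\mathcal{I}$ a hereditarily meager ideal on $X$, and $\tau$ an $\mathcal{I}$-crowded topology on $X$ with $w(\tau)<\mathfrak{m}_c$. Suppose $A\subseteq X$ is $(\mathcal{I},\tau)$-crowded. Then there is a partition $A=\bigcup_{m\in\omega}A_m$ such that each $A_m$ is $(\mathcal{I},\tau)$-crowded and dense in $A$.
   Context: An ideal on $X$ is a family of subsets of $X$ closed under subsets and finite unions; all ideals are assumed proper ($X\notin\mathcal{I}$) and free (every finite subset of $X$ is in $\mathcal{I}$). $\mathcal{I}^+=\mathcal{P}(X)\setminus\mathcal{I}$. Subsets of $X$ are identified with points of $2^X$ (product topology). $\mathcal{I}$ is hereditarily meager (HM) if for every $A\in\mathcal{I}^+$, $\mathcal{I}\cap\mathcal{P}(A)$ is meager in $2^A$. A topology $\tau$ on $X$ is $\mathcal{I}$-crowded if $\tau\cap\mathcal{I}=\{\emptyset\}$. A set $A\subseteq X$ is $(\mathcal{I},\tau)$-crowded if for every $U\in\tau$, $A\cap U$ is either empty or belongs to $\mathcal{I}^+$. $\mathfrak{m}_c$ is the least cardinal $\kappa$ such that Martin's Axiom MA$(\kappa)$ for countable posets fails. $w$ denotes weight. *)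

theory Defs
  imports "HOL-Analysis.Analysis"
begin

definition is_ideal_on :: "'a set \<Rightarrow> 'a set set \<Rightarrow> bool" where
  "is_ideal_on X I \<longleftrightarrow>
     I \<subseteq> Pow X \<and>
     (\<forall>A\<in>I. \<forall>B. B \<subseteq> A \<longrightarrow> B \<in> I) \<and>
     (\<forall>A\<in>I. \<forall>B\<in>I. A \<union> B \<in> I) \<and>
     X \<notin> I \<and>
     (\<forall>F. F \<subseteq> X \<and> finite F \<longrightarrow> F \<in> I)"

definition nowhere_dense_in :: "'x topology \<Rightarrow> 'x set \<Rightarrow> bool" where
  "nowhere_dense_in T S \<longleftrightarrow> S \<subseteq> topspace T \<and> T interior_of (T closure_of S) = {}"

definition meager_in :: "'x topology \<Rightarrow> 'x set \<Rightarrow> bool" where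
  "meager_in T S \<longleftrightarrow> S \<subseteq> topspace T \<and>
     (\<exists>N :: nat \<Rightarrow> 'x set. (\<forall>n. nowhere_dense_in T (N n)) \<and> S \<subseteq> (\<Union>n. N n))"

text \<open>The Cantor cube \<open>2^A\<close> with the product topology; a subset \<open>S \<subseteq> A\<close> is
  identified with its characteristic function restricted to \<open>A\<close>.\<close>
definition cantor_cube :: "'a set \<Rightarrow> ('a \<Rightarrow> bool) topology" where
  "cantor_cube A = product_topology (\<lambda>_. discrete_topology (UNIV :: bool set)) A"

definition char_point :: "'a set \<Rightarrow> 'a set \<Rightarrow> ('a \<Rightarrow> bool)" where
  "char_point A S = restrict (\<lambda>x. x \<in> S) A"

definition hereditarily_meager :: "'a set \<Rightarrow> 'a set set \<Rightarrow> bool" where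
  "hereditarily_meager X I \<longleftrightarrow>
     (\<forall>A. A \<subseteq> X \<and> A \<notin> I \<longrightarrow> meager_in (cantor_cube A) (char_point A ` (I \<inter> Pow A)))"

definition ideal_crowded_topology :: "'a set set \<Rightarrow> 'a topology \<Rightarrow> bool" where
  "ideal_crowded_topology I T \<longleftrightarrow> (\<forall>U. openin T U \<and> U \<in> I \<longrightarrow> U = {})"

definition ideal_top_crowded :: "'a set set \<Rightarrow> 'a topology \<Rightarrow> 'a set \<Rightarrow> bool" where
  "ideal_top_crowded I T A \<longleftrightarrow> (\<forall>U. openin T U \<longrightarrow> A \<inter> U = {} \<or> A \<inter> U \<notin> I)"

text \<open>Countable posets are represented (up to isomorphism) on a carrier \<open>P \<subseteq> nat\<close>.\<close>
definition partial_order_on_set :: "nat set \<Rightarrow> (nat \<Rightarrow> nat \<Rightarrow> bool) \<Rightarrow> bool" where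
  "partial_order_on_set P le \<longleftrightarrow>
     (\<forall>p\<in>P. le p p) \<and>
     (\<forall>p\<in>P. \<forall>q\<in>P. le p q \<and> le q p \<longrightarrow> p = q) \<and>
     (\<forall>p\<in>P. \<forall>q\<in>P. \<forall>r\<in>P. le p q \<and> le q r \<longrightarrow> le p r)"

definition dense_in_poset :: "nat set \<Rightarrow> (nat \<Rightarrow> nat \<Rightarrow> bool) \<Rightarrow> nat set \<Rightarrow> bool" where
  "dense_in_poset P le D \<longleftrightarrow> D \<subseteq> P \<and> (\<forall>p\<in>P. \<exists>q\<in>D. le q p)"

definition filter_in_poset :: "nat set \<Rightarrow> (nat \<Rightarrow> nat \<Rightarrow> bool) \<Rightarrow> nat set \<Rightarrow> bool" where
  "filter_in_poset P le G \<longleftrightarrow> G \<subseteq> P \<and> G \<noteq> {} \<and>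
     (\<forall>p\<in>G. \<forall>q\<in>P. le p q \<longrightarrow> q \<in> G) \<and>
     (\<forall>p\<in>G. \<forall>q\<in>G. \<exists>r\<in>G. le r p \<and> le r q)"

text \<open>\<open>MA_countable K\<close>: MA(\<kappa>) for countable posets, where \<kappa> = |K|.\<close>
definition MA_countable :: "'b set \<Rightarrow> bool" where
  "MA_countable K \<longleftrightarrow>
     (\<forall>P le (D :: 'b \<Rightarrow> nat set). P \<noteq> {} \<and> partial_order_on_set P le \<and>
        (\<forall>k\<in>K. dense_in_poset P le (D k)) \<longrightarrow>
        (\<exists>G. filter_in_poset P le G \<and> (\<forall>k\<in>K. G \<inter> D k \<noteq> {})))"

definition is_base_of :: "'a topology \<Rightarrow> 'a set set \<Rightarrow> bool" where
  "is_base_of T B \<longleftrightarrow> openin T = arbitrary union_of (\<lambda>V. V \<in> B)"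

text \<open>\<open>w(T) < m_c\<close>, where m_c is the least cardinal \<kappa> for which MA(\<kappa>) for countable
  posets fails: i.e. MA(\<kappa>) holds for every cardinal \<kappa> \<le> w(T), where \<kappa> \<le> w(T) means
  \<kappa> is at most the cardinality of every base.  Since w(T) \<le> |Pow X|, all such \<kappa>
  are represented by sets \<open>K :: 'a set set\<close>.\<close>
definition weight_below_mc :: "'a topology \<Rightarrow> bool" where
  "weight_below_mc T \<longleftrightarrow>
     (\<forall>K :: 'a set set. (\<forall>B. is_base_of T B \<longrightarrow> (card_of K, card_of B) \<in> ordLeq) \<longrightarrow> MA_countable K)"

end

theory Submission
  imports Defs
begin

context includes cardinal_syntax begin

lemma min_base:
  fixes T :: "'a topology"
  shows "\<exists>B0. is_base_of T B0 \<and> (\<forall>B. is_base_of T B \<longrightarrow> |B0| \<le>o |B| )"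
proof -
  have b: "is_base_of T {U. openin T U}"
    unfolding is_base_of_def openin_topology_base_unique by auto
  let ?S = "{|B| | B. is_base_of T B}"
  have "|{U. openin T U}| \<in> ?S" using b by blast
  then obtain z where z: "z \<in> ?S" "\<And>y. (y, z) \<in> ordLess \<Longrightarrow> y \<notin> ?S"
    by (rule wfE_min[OF wf_ordLess]) blast+
  then obtain B0 where B0: "is_base_of T B0" "z = |B0|" by blast
  have "\<forall>B. is_base_of T B \<longrightarrow> |B0| \<le>o |B|"
  proof (intro allI impI)
    fix B assume "is_base_of T B"
    then have "|B| \<in> ?S" by blast
    then have "\<not> |B| <o |B0|" using z(2)[of "|B|"] B0(2) by blast
    then show "|B0| \<le>o |B|" using not_ordLess_iff_ordLeq card_of_Well_order by blast
  qed
  then show ?thesis using B0 by blast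
qed

end

lemma RS_lemma:
  fixes P' :: "'c set set" and D :: "'j \<Rightarrow> 'c set set"
  assumes "countable J" "s0 \<in> P'" "\<forall>j\<in>J. D j \<subseteq> P' \<and> (\<forall>s\<in>P'. \<exists>t\<in>D j. s \<subseteq> t)"
  shows "\<exists>G. G \<subseteq> P' \<and> (\<forall>a\<in>G. \<forall>b\<in>G. \<exists>c\<in>G. a \<union> b \<subseteq> c) \<and> (\<forall>j\<in>J. G \<inter> D j \<noteq> {})"
proof (cases "J = {}")
  case True
  then show ?thesis using assms(2) by (intro exI[of _ "{s0}"]) auto
next
  case False
  define e where "e = from_nat_into J"
  have eJ: "e n \<in> J" for n using False e_def from_nat_into by metis
  define step where "step n s = (SOME t. t \<in> D (e n) \<and> s \<subseteq> t)" for n s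
  define p where "p = rec_nat s0 step"
  have p0: "p 0 = s0" and pS: "p (Suc n) = step n (p n)" for n by (simp_all add: p_def)
  have "p n \<in> P' \<and> p (Suc n) \<in> D (e n) \<and> p n \<subseteq> p (Suc n)" for n
  proof (induction n)
    case 0
    have "\<exists>t. t \<in> D (e 0) \<and> s0 \<subseteq> t" using assms(2,3) eJ by blast
    then show ?case using p0 pS[of 0] assms(2) unfolding step_def by (metis (mono_tags, lifting) someI_ex)
  next
    case (Suc n)
    then have "p (Suc n) \<in> P'" using assms(3) eJ by blast
    moreover have "\<exists>t. t \<in> D (e (Suc n)) \<and> p (Suc n) \<subseteq> t" using calculation assms(3) eJ by blast
    ultimately show ?case using pS[of "Suc n"] unfolding step_def by (metis (mono_tags, lifting) someI_ex)
  qed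
  then have pP: "\<And>n. p n \<in> P'" and pD: "\<And>n. p (Suc n) \<in> D (e n)" and pm: "\<And>n. p n \<subseteq> p (Suc n)" by auto
  have mono: "i \<le> j \<Longrightarrow> p i \<subseteq> p j" for i j using lift_Suc_mono_le[of p, OF pm] by blast
  show ?thesis
  proof (intro exI[of _ "range p"] conjI ballI)
    show "range p \<subseteq> P'" using pP by auto
  next
    fix a b assume "a \<in> range p" "b \<in> range p"
    then obtain i j where "a = p i" "b = p j" by auto
    then show "\<exists>c\<in>range p. a \<union> b \<subseteq> c"
      using mono[of i "max i j"] mono[of j "max i j"] by (intro bexI[of _ "p (max i j)"]) auto
  next
    fix j assume "j \<in> J"
    then obtain n where "e n = j" using from_nat_into_surj assms(1) e_def by metis
    then show "range p \<inter> D j \<noteq> {}" using pD[of n] by auto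
  qed
qed

lemma MA_transfer:
  fixes P' :: "'c set set" and K :: "'b set" and g :: "'b \<Rightarrow> 'j" and D :: "'j \<Rightarrow> 'c set set"
  assumes MA: "MA_countable K" and cP: "countable P'" and s0: "s0 \<in> P'" and gK: "g ` K = J"
    and dens: "\<forall>j\<in>J. D j \<subseteq> P' \<and> (\<forall>s\<in>P'. \<exists>t\<in>D j. s \<subseteq> t)"
  shows "\<exists>G. G \<subseteq> P' \<and> (\<forall>a\<in>G. \<forall>b\<in>G. \<exists>c\<in>G. a \<union> b \<subseteq> c) \<and> (\<forall>j\<in>J. G \<inter> D j \<noteq> {})"
proof -
  define enc where "enc = to_nat_on P'"
  define dec where "dec = from_nat_into P'"
  have de: "\<And>s. s \<in> P' \<Longrightarrow> dec (enc s) = s" unfolding enc_def dec_def using cP by simp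
  define P where "P = enc ` P'"
  define le where "le a b = (dec b \<subseteq> dec a)" for a b
  define DD where "DD k = enc ` D (g k)" for k
  have "P \<noteq> {}" using s0 P_def by auto
  moreover have "partial_order_on_set P le"
    unfolding partial_order_on_set_def
  proof (intro conjI ballI impI)
    fix p q assume "p \<in> P" "q \<in> P" "le p q \<and> le q p"
    then show "p = q" unfolding P_def le_def using de by (metis image_iff subset_antisym)
  qed (auto simp: le_def)
  moreover have "\<forall>k\<in>K. dense_in_poset P le (DD k)"
  proof
    fix k assume "k \<in> K"
    then have j: "g k \<in> J" using gK by auto
    show "dense_in_poset P le (DD k)"
      unfolding dense_in_poset_def
    proof
      show "DD k \<subseteq> P" using dens j unfolding DD_def P_def by auto
      show "\<forall>p\<in>P. \<exists>q\<in>DD k. le q p"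
      proof
        fix p assume "p \<in> P"
        then obtain s where s: "s \<in> P'" "p = enc s" unfolding P_def by auto
        then obtain t where t: "t \<in> D (g k)" "s \<subseteq> t" using dens j by blast
        then have "t \<in> P'" using dens j by blast
        then show "\<exists>q\<in>DD k. le q p" using t s de unfolding DD_def le_def by (intro bexI[of _ "enc t"]) auto
      qed
    qed
  qed
  ultimately have "\<exists>G. filter_in_poset P le G \<and> (\<forall>k\<in>K. G \<inter> DD k \<noteq> {})"
    using MA[unfolded MA_countable_def, rule_format, of P le DD] by blast
  then obtain GG where GG: "filter_in_poset P le GG" "\<forall>k\<in>K. GG \<inter> DD k \<noteq> {}"
    by blast
  show ?thesis
  proof (intro exI[of _ "dec ` GG"] conjI ballI)
    have "GG \<subseteq> P" using GG(1) unfolding filter_in_poset_def by blast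
    then show "dec ` GG \<subseteq> P'" using de unfolding P_def by auto
  next
    fix a b assume "a \<in> dec ` GG" "b \<in> dec ` GG"
    then obtain p q where "p \<in> GG" "q \<in> GG" "a = dec p" "b = dec q" by auto
    then obtain r where "r \<in> GG" "le r p" "le r q" using GG(1) unfolding filter_in_poset_def by blast
    then show "\<exists>c\<in>dec ` GG. a \<union> b \<subseteq> c" using \<open>a = dec p\<close> \<open>b = dec q\<close> unfolding le_def by blast
  next
    fix j assume "j \<in> J"
    then obtain k where k: "k \<in> K" "j = g k" using gK by auto
    then obtain a where "a \<in> GG" "a \<in> DD k" using GG(2) by blast
    then obtain t where "t \<in> D j" "a = enc t" using k unfolding DD_def by auto
    moreover have "t \<in> P'" using calculation dens \<open>j \<in> J\<close> by blast
    ultimately show "dec ` GG \<inter> D j \<noteq> {}" using de \<open>a \<in> GG\<close> by (metis IntI empty_iff image_eqI)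
  qed
qed


definition cyl :: "'a set \<Rightarrow> nat \<Rightarrow> ('a \<times> nat) set \<Rightarrow> ('a \<Rightarrow> bool) set" where
  "cyl B m t = {y \<in> topspace (cantor_cube B). \<forall>(x,k)\<in>t. x \<in> B \<longrightarrow> y x = (k = m)}"

lemma topspace_cc: "topspace (cantor_cube B) = (\<Pi>\<^sub>E i\<in>B. UNIV)"
  unfolding cantor_cube_def by simp

lemma cyl_open:
  assumes "finite s"
  shows "openin (cantor_cube B) (cyl B m s)"
  unfolding cantor_cube_def openin_product_topology_alt
proof
  fix y assume y: "y \<in> cyl B m s"
  define U where "U i = (if i \<in> Domain s then {y i} else UNIV)" for i
  have "finite {i \<in> B. U i \<noteq> topspace (discrete_topology UNIV)}"
    by (rule finite_subset[of _ "Domain s"]) (auto simp: U_def assms finite_Domain)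
  moreover have "y \<in> Pi\<^sub>E B U" using y unfolding cyl_def topspace_cc U_def by auto
  moreover have "Pi\<^sub>E B U \<subseteq> cyl B m s"
  proof
    fix z assume z: "z \<in> Pi\<^sub>E B U"
    have "z \<in> (\<Pi>\<^sub>E i\<in>B. UNIV)" using z by (auto simp: PiE_iff)
    moreover have "\<forall>(x,k)\<in>s. x \<in> B \<longrightarrow> z x = (k = m)"
    proof (clarify)
      fix x k assume "(x,k) \<in> s" "x \<in> B"
      then have "z x = y x" using z unfolding U_def by (auto simp: PiE_iff Domain.DomainI)
      then show "z x = (k = m)" using y \<open>(x,k) \<in> s\<close> \<open>x \<in> B\<close> unfolding cyl_def by auto
    qed
    ultimately show "z \<in> cyl B m s" unfolding cyl_def topspace_cc by auto
  qed
  ultimately show "\<exists>U. finite {i \<in> B. U i \<noteq> topspace (discrete_topology UNIV)} \<and>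
      (\<forall>i\<in>B. openin (discrete_topology UNIV) (U i)) \<and> y \<in> Pi\<^sub>E B U \<and> Pi\<^sub>E B U \<subseteq> cyl B m s"
    by auto
qed

lemma cyl_ne:
  assumes "single_valued s"
  shows "restrict (\<lambda>x. (x,m) \<in> s) B \<in> cyl B m s"
  unfolding cyl_def topspace_cc using assms by (auto simp: single_valued_def)

lemma cyl_dense:
  assumes nd: "nowhere_dense_in (cantor_cube B) N" and BA: "B \<subseteq> A"
    and s: "finite s" "s \<subseteq> A \<times> UNIV" "single_valued s"
  shows "\<exists>t. s \<subseteq> t \<and> finite t \<and> t \<subseteq> A \<times> UNIV \<and> single_valued t \<and> cyl B m t \<inter> N = {}"
proof -
  let ?C = "cantor_cube B closure_of N"
  define W where "W = cyl B m s - ?C"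
  have Wo: "openin (cantor_cube B) W" unfolding W_def
    using cyl_open[OF s(1)] by (intro openin_diff) auto
  have "W \<noteq> {}"
  proof
    assume "W = {}"
    then have "cyl B m s \<subseteq> ?C" unfolding W_def by auto
    then have "cyl B m s \<subseteq> cantor_cube B interior_of ?C"
      using cyl_open[OF s(1)] by (rule interior_of_maximal)
    then show False using nd cyl_ne[OF s(3)] unfolding nowhere_dense_in_def by auto
  qed
  then obtain y0 where y0: "y0 \<in> W" by auto
  then obtain U where U: "finite {i \<in> B. U i \<noteq> topspace (discrete_topology (UNIV::bool set))}"
      "y0 \<in> Pi\<^sub>E B U" "Pi\<^sub>E B U \<subseteq> W"
    using Wo unfolding cantor_cube_def openin_product_topology_alt by blast
  define F where "F = {i \<in> B. U i \<noteq> UNIV}"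
  have fF: "finite F" using U(1) unfolding F_def by simp
  define t where "t = s \<union> (\<lambda>x. (x, if y0 x then m else Suc m)) ` {x \<in> F. x \<notin> Domain s}"
  have y0s: "y0 \<in> cyl B m s" using y0 W_def by auto
  have "s \<subseteq> t" unfolding t_def by auto
  moreover have "finite t" unfolding t_def using s(1) fF by auto
  moreover have "t \<subseteq> A \<times> UNIV" unfolding t_def F_def using s(2) BA by auto
  moreover have "single_valued t" using s(3) unfolding t_def single_valued_def by (auto simp: Domain.DomainI)
  moreover have "cyl B m t \<subseteq> W"
  proof
    fix z assume z: "z \<in> cyl B m t"
    have "z \<in> Pi\<^sub>E B U"
    proof (unfold PiE_iff, intro conjI ballI)
      show "z \<in> extensional B" using z unfolding cyl_def topspace_cc by (auto simp: PiE_iff)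
    next
      fix i assume i: "i \<in> B"
      show "z i \<in> U i"
      proof (cases "i \<in> F")
        case False then show ?thesis using i unfolding F_def by auto
      next
        case True
        have "z i = y0 i"
        proof (cases "i \<in> Domain s")
          case True
          then obtain k where "(i,k) \<in> s" by auto
          then have "(i,k) \<in> t" unfolding t_def by auto
          then show ?thesis using z y0s \<open>(i,k) \<in> s\<close> i unfolding cyl_def by auto
        next
          case False
          then have "(i, if y0 i then m else Suc m) \<in> t" using \<open>i \<in> F\<close> unfolding t_def by auto
          then have "z i = ((if y0 i then m else Suc m) = m)" using z i unfolding cyl_def by fast
          then show ?thesis by (cases "y0 i") auto
        qed
        then show ?thesis using U(2) i by (auto simp: PiE_iff)
      qed
    qed
    then show "z \<in> W" using U(3) by auto
  qed
  moreover have "N \<subseteq> ?C" using nd unfolding nowhere_dense_in_def by (simp add: closure_of_subset)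
  ultimately show ?thesis unfolding W_def by (intro exI[of _ t]) auto
qed


lemma get_generic:
  fixes T :: "'a topology" and P' :: "'c set set" and D :: "'a set \<times> nat \<times> nat \<Rightarrow> 'c set set"
  assumes wb: "weight_below_mc T" and B0: "is_base_of T B0" "\<forall>B. is_base_of T B \<longrightarrow> (card_of B0, card_of B) \<in> ordLeq"
    and B0ne: "B0 \<noteq> {}"
    and cP: "countable P'" and s0: "s0 \<in> P'"
    and dens: "\<forall>j\<in>B0 \<times> UNIV \<times> UNIV. D j \<subseteq> P' \<and> (\<forall>s\<in>P'. \<exists>t\<in>D j. s \<subseteq> t)"
  shows "\<exists>G. G \<subseteq> P' \<and> (\<forall>a\<in>G. \<forall>b\<in>G. \<exists>c\<in>G. a \<union> b \<subseteq> c) \<and> (\<forall>j\<in>B0 \<times> UNIV \<times> UNIV. G \<inter> D j \<noteq> {})"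
proof (cases "finite B0")
  case True
  then have "countable (B0 \<times> (UNIV::nat set) \<times> (UNIV::nat set))" by (simp add: countable_finite)
  from RS_lemma[OF this s0 dens] show ?thesis .
next
  case False
  have MA: "MA_countable B0" using wb B0(2) unfolding weight_below_mc_def by blast
  have n1: "(card_of (UNIV::nat set), card_of B0) \<in> ordLeq" using False infinite_iff_card_of_nat by blast
  have "(card_of ((UNIV::nat set) \<times> (UNIV::nat set)), card_of (UNIV::nat set)) \<in> ordIso"
    using card_of_Times_same_infinite[of "UNIV::nat set"] by simp
  then have n2: "(card_of ((UNIV::nat set) \<times> (UNIV::nat set)), card_of B0) \<in> ordLeq"
    using n1 ordIso_ordLeq_trans by blast
  have "(card_of (B0 \<times> ((UNIV::nat set) \<times> (UNIV::nat set))), card_of B0) \<in> ordIso"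
    using card_of_Times_infinite_simps(1)[OF False _ n2] by simp
  then have "(card_of (B0 \<times> ((UNIV::nat set) \<times> (UNIV::nat set))), card_of B0) \<in> ordLeq"
    using ordIso_iff_ordLeq by blast
  moreover have "B0 \<times> ((UNIV::nat set) \<times> (UNIV::nat set)) \<noteq> {}" using B0ne by auto
  ultimately have "\<exists>g. g ` B0 = B0 \<times> ((UNIV::nat set) \<times> (UNIV::nat set))"
    using card_of_ordLeq2[of "B0 \<times> ((UNIV::nat set) \<times> (UNIV::nat set))" B0] by simp
  then obtain g where "g ` B0 = B0 \<times> ((UNIV::nat set) \<times> (UNIV::nat set))" by blast
  from MA_transfer[OF MA cP s0 this dens] show ?thesis .
qed

theorem mainTheorem2:
  fixes X :: "'a set" and I :: "'a set set" and T :: "'a topology" and A :: "'a set"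
  assumes "countable X" and "infinite X"
    and "is_ideal_on X I"
    and "hereditarily_meager X I"
    and "topspace T = X"
    and "ideal_crowded_topology I T"
    and "weight_below_mc T"
    and "A \<subseteq> X"
    and "ideal_top_crowded I T A"
  shows "\<exists>As :: nat \<Rightarrow> 'a set.
           (\<Union>m. As m) = A \<and>
           (\<forall>m n. m \<noteq> n \<longrightarrow> As m \<inter> As n = {}) \<and>
           (\<forall>m. ideal_top_crowded I T (As m) \<and> A \<subseteq> T closure_of (As m))"
proof -
  note ass = assms
  obtain B0 where B0: "is_base_of T B0" "\<forall>B. is_base_of T B \<longrightarrow> (card_of B0, card_of B) \<in> ordLeq"
    using min_base by blast
  have Bo: "\<And>V. V \<in> B0 \<Longrightarrow> openin T V"
    and Bb: "\<And>U x. openin T U \<Longrightarrow> x \<in> U \<Longrightarrow> \<exists>V\<in>B0. x \<in> V \<and> V \<subseteq> U"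
    using B0(1) unfolding is_base_of_def openin_topology_base_unique by blast+
  have "X \<noteq> {}" using ass(2) by auto
  then obtain x0 where "x0 \<in> topspace T" using ass(5) by auto
  then have B0ne: "B0 \<noteq> {}" using Bb[of "topspace T" x0] by auto
  have Idown: "\<And>S S'. S \<in> I \<Longrightarrow> S' \<subseteq> S \<Longrightarrow> S' \<in> I" using ass(3) unfolding is_ideal_on_def by blast
  have Iempty: "{} \<in> I" using ass(3) unfolding is_ideal_on_def by blast
  have AVpos: "\<And>V. V \<in> B0 \<Longrightarrow> A \<inter> V \<noteq> {} \<Longrightarrow> A \<inter> V \<notin> I"
    using ass(9) Bo unfolding ideal_top_crowded_def by blast
  have "\<forall>V\<in>{V\<in>B0. A \<inter> V \<noteq> {}}. \<exists>N::nat \<Rightarrow> ('a \<Rightarrow> bool) set. (\<forall>n. nowhere_dense_in (cantor_cube (A \<inter> V)) (N n)) \<and>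
          char_point (A \<inter> V) ` (I \<inter> Pow (A \<inter> V)) \<subseteq> (\<Union>n. N n)"
  proof
    fix V assume V: "V \<in> {V\<in>B0. A \<inter> V \<noteq> {}}"
    then have "A \<inter> V \<subseteq> X" "A \<inter> V \<notin> I" using AVpos ass(8) by auto
    then show "\<exists>N::nat \<Rightarrow> ('a \<Rightarrow> bool) set. (\<forall>n. nowhere_dense_in (cantor_cube (A \<inter> V)) (N n)) \<and>
          char_point (A \<inter> V) ` (I \<inter> Pow (A \<inter> V)) \<subseteq> (\<Union>n. N n)"
    proof -
      have "meager_in (cantor_cube (A \<inter> V)) (char_point (A \<inter> V) ` (I \<inter> Pow (A \<inter> V)))"
        using ass(4) \<open>A \<inter> V \<subseteq> X\<close> \<open>A \<inter> V \<notin> I\<close> unfolding hereditarily_meager_def by (simp del: Pow_Int_eq)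
      then show ?thesis unfolding meager_in_def by (rule conjunct2)
    qed
  qed
  from bchoice[OF this] obtain Nf where Nf0: "\<forall>V\<in>{V\<in>B0. A \<inter> V \<noteq> {}}. (\<forall>n::nat. nowhere_dense_in (cantor_cube (A \<inter> V)) (Nf V n)) \<and>
          char_point (A \<inter> V) ` (I \<inter> Pow (A \<inter> V)) \<subseteq> (\<Union>n. Nf V n)" by blast
  have Nf: "\<And>V. V \<in> B0 \<Longrightarrow> A \<inter> V \<noteq> {} \<Longrightarrow> (\<forall>n::nat. nowhere_dense_in (cantor_cube (A \<inter> V)) (Nf V n)) \<and>
          char_point (A \<inter> V) ` (I \<inter> Pow (A \<inter> V)) \<subseteq> (\<Union>n. Nf V n)"
    using Nf0 by blast
  define P' where "P' = {s. finite s \<and> s \<subseteq> A \<times> (UNIV::nat set) \<and> single_valued s}"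
  have cA: "countable A" using ass(1,8) countable_subset by blast
  have "countable {s. finite s \<and> s \<subseteq> A \<times> (UNIV::nat set)}"
    by (rule countable_Collect_finite_subset) (simp add: cA)
  then have cP: "countable P'" unfolding P'_def by (rule countable_subset[rotated]) auto
  have s0: "{} \<in> P'" unfolding P'_def by (auto simp: single_valued_def)
  define D where "D j = (case j of (V, m, n) \<Rightarrow> {s \<in> P'. A \<inter> V = {} \<or> cyl (A \<inter> V) m s \<inter> Nf V n = {}})" for j
  have dens: "\<forall>j\<in>B0 \<times> UNIV \<times> UNIV. D j \<subseteq> P' \<and> (\<forall>s\<in>P'. \<exists>t\<in>D j. s \<subseteq> t)"
  proof (clarify)
    fix V m n assume V: "V \<in> B0"
    show "D (V, m, n) \<subseteq> P' \<and> (\<forall>s\<in>P'. \<exists>t\<in>D (V, m, n). s \<subseteq> t)"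
    proof (intro conjI ballI)
      show "D (V, m, n) \<subseteq> P'" unfolding D_def by auto
    next
      fix s assume s: "s \<in> P'"
      show "\<exists>t\<in>D (V, m, n). s \<subseteq> t"
      proof (cases "A \<inter> V = {}")
        case True then show ?thesis using s unfolding D_def by auto
      next
        case False
        then have "nowhere_dense_in (cantor_cube (A \<inter> V)) (Nf V n)" using Nf V by blast
        then obtain t where "s \<subseteq> t" "finite t" "t \<subseteq> A \<times> UNIV" "single_valued t" "cyl (A \<inter> V) m t \<inter> Nf V n = {}"
          using cyl_dense[of "A \<inter> V" "Nf V n" A s m] s unfolding P'_def by blast
        then show ?thesis unfolding D_def P'_def by auto
      qed
    qed
  qed
  obtain G where G: "G \<subseteq> P'" "\<forall>a\<in>G. \<forall>b\<in>G. \<exists>c\<in>G. a \<union> b \<subseteq> c" "\<forall>j\<in>B0 \<times> UNIV \<times> UNIV. G \<inter> D j \<noteq> {}"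
    using get_generic[OF ass(7) B0 B0ne cP s0 dens] by blast
  define R where "R = \<Union>G"
  have svR: "\<And>x a b. (x,a) \<in> R \<Longrightarrow> (x,b) \<in> R \<Longrightarrow> a = b"
  proof -
    fix x a b assume "(x,a) \<in> R" "(x,b) \<in> R"
    then obtain s1 s2 where "s1 \<in> G" "s2 \<in> G" "(x,a) \<in> s1" "(x,b) \<in> s2" unfolding R_def by auto
    then obtain c where "c \<in> G" "s1 \<union> s2 \<subseteq> c" using G(2) by blast
    then have "single_valued c" using G(1) unfolding P'_def by auto
    then show "a = b" using \<open>s1 \<union> s2 \<subseteq> c\<close> \<open>(x,a) \<in> s1\<close> \<open>(x,b) \<in> s2\<close> unfolding single_valued_def by blast
  qed
  have key: "\<And>V m. V \<in> B0 \<Longrightarrow> A \<inter> V \<noteq> {} \<Longrightarrow> {x \<in> A \<inter> V. (x,m) \<in> R} \<notin> I"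
  proof
    fix V m assume V: "V \<in> B0" "A \<inter> V \<noteq> {}"
    define S where "S = {x \<in> A \<inter> V. (x,m) \<in> R}"
    assume "S \<in> I"
    then have "char_point (A \<inter> V) S \<in> (\<Union>n. Nf V n)" using Nf[OF V] unfolding S_def by blast
    then obtain n where n: "char_point (A \<inter> V) S \<in> Nf V n" by blast
    obtain s where s: "s \<in> G" "s \<in> D (V, m, n)" using G(3) V(1) by blast
    then have cs: "cyl (A \<inter> V) m s \<inter> Nf V n = {}" using V(2) unfolding D_def by auto
    have "char_point (A \<inter> V) S \<in> cyl (A \<inter> V) m s"
      unfolding cyl_def topspace_cc
    proof (intro CollectI conjI)
      show "char_point (A \<inter> V) S \<in> (\<Pi>\<^sub>E i\<in>A \<inter> V. UNIV)" unfolding char_point_def by auto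
      show "\<forall>(x,k)\<in>s. x \<in> A \<inter> V \<longrightarrow> char_point (A \<inter> V) S x = (k = m)"
      proof (clarify)
        fix x k assume xk: "(x,k) \<in> s" "x \<in> A" "x \<in> V"
        then have "(x,k) \<in> R" using s(1) unfolding R_def by auto
        then have "((x,m) \<in> R) = (k = m)" using svR by blast
        then show "char_point (A \<inter> V) S x = (k = m)" using xk unfolding char_point_def S_def by auto
      qed
    qed
    then show False using n cs by blast
  qed
  define As where "As m = (if m = 0 then {x \<in> A. \<forall>k. (x,k) \<in> R \<longrightarrow> k = 0} else {x \<in> A. (x,m) \<in> R})" for m
  have sub: "\<And>m V. {x \<in> A \<inter> V. (x,m) \<in> R} \<subseteq> As m \<inter> V"
    unfolding As_def using svR by auto
  have AmV: "\<And>m V. V \<in> B0 \<Longrightarrow> A \<inter> V \<noteq> {} \<Longrightarrow> As m \<inter> V \<notin> I"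
  proof
    fix m V assume "V \<in> B0" "A \<inter> V \<noteq> {}" "As m \<inter> V \<in> I"
    then have "{x \<in> A \<inter> V. (x,m) \<in> R} \<in> I" using sub[of V m] Idown by blast
    then show False using key[OF \<open>V \<in> B0\<close> \<open>A \<inter> V \<noteq> {}\<close>] by blast
  qed
  have AsA: "\<And>m. As m \<subseteq> A" unfolding As_def by auto
  have crowd: "\<And>m U x. openin T U \<Longrightarrow> x \<in> A \<Longrightarrow> x \<in> U \<Longrightarrow> As m \<inter> U \<notin> I"
  proof
    fix m U x assume "openin T U" "x \<in> A" "x \<in> U" "As m \<inter> U \<in> I"
    then obtain V where "V \<in> B0" "x \<in> V" "V \<subseteq> U" using Bb by blast
    then have "As m \<inter> V \<notin> I" using AmV \<open>x \<in> A\<close> by blast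
    moreover have "As m \<inter> V \<subseteq> As m \<inter> U" using \<open>V \<subseteq> U\<close> by auto
    ultimately show False using Idown \<open>As m \<inter> U \<in> I\<close> by blast
  qed
  show ?thesis
  proof (intro exI[of _ As] conjI allI impI)
    show "(\<Union>m. As m) = A"
    proof
      show "(\<Union>m. As m) \<subseteq> A" using AsA by blast
      show "A \<subseteq> (\<Union>m. As m)"
      proof
        fix x assume "x \<in> A"
        show "x \<in> (\<Union>m. As m)"
        proof (cases "\<exists>k. k \<noteq> 0 \<and> (x,k) \<in> R")
          case True
          then obtain k where "k \<noteq> 0" "(x,k) \<in> R" by blast
          then have "x \<in> As k" using \<open>x \<in> A\<close> unfolding As_def by auto
          then show ?thesis by blast
        next
          case False
          then have "x \<in> As 0" using \<open>x \<in> A\<close> unfolding As_def by auto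
          then show ?thesis by blast
        qed
      qed
    qed
  next
    fix m n :: nat assume "m \<noteq> n"
    then show "As m \<inter> As n = {}" unfolding As_def using svR by auto
  next
    fix m
    show "ideal_top_crowded I T (As m)"
      unfolding ideal_top_crowded_def
    proof (intro allI impI)
      fix U assume "openin T U"
      show "As m \<inter> U = {} \<or> As m \<inter> U \<notin> I"
      proof (cases "As m \<inter> U = {}")
        case False
        then obtain x where "x \<in> As m" "x \<in> U" by blast
        then show ?thesis using crowd[OF \<open>openin T U\<close> _ \<open>x \<in> U\<close>] AsA by blast
      qed simp
    qed
    show "A \<subseteq> T closure_of As m"
    proof
      fix x assume x: "x \<in> A"
      show "x \<in> T closure_of As m"
        unfolding in_closure_of
      proof (intro conjI allI impI)
        show "x \<in> topspace T" using x ass(5,8) by auto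
        fix U assume "x \<in> U \<and> openin T U"
        then have "As m \<inter> U \<noteq> {}" using crowd[of U x m] x Iempty by auto
        then show "\<exists>y. y \<in> As m \<and> y \<in> U" by blast
      qed
    qed
  qed
qed

end
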